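(* Let $\sigma$ be a finite sequence of transitions such that $G_\sigma$ has no negative cycle, and let $n=|X|$. If $\sigma$ does not admit a pattern, then for every pair $(x,y)\in X\times X$ for which some complete p-tree with root labelled $(x,y)$ exists, there is a complete p-tree with root labelled $(x,y)$ of height at most $n^2$ whose weight is less than or equal to the weight of every complete p-tree with root labelled $(x,y)$.
   Context: Fix a finite set of clocks $X=\{x_0,\dots,x_m\}$ and a finite sequence $\sigma$ of timed-automaton transitions over $X$. A weight is a pair $(\preccurlyeq,d)$ with $\preccurlyeq\in\{<,\le\}$, $d\in\mathbb{Z}$; weights are added by $(\preccurlyeq_1,d_1)+(\preccurlyeq_2,d_2)=(\preccurlyeq,d_1+d_2)$, $\preccurlyeq$ being $<$ iff one of $\preccurlyeq_1,\preccurlyeq_2$ is $<$, and totally ordered by $(\preccurlyeq,d)<(\preccurlyeq',d')$ iff $d<d'$, or $d=d'$, $\preccurlyeq$ is $<$ and $\preccurlyeq'$ is $\le$. A weight is negative if it is smaller than $(\le,0)$. $G_\sigma$ is the transformation graph of $\sigma$ (a directed graph with weighted edges on vertex set $\{0,\dots,k\}\times X$ encoding time elapse, guards and resets of the transitions of $\sigma$). For a graph $G$ on $\{0,\dots,k\}\times X$ without negative cycles, its canonical form has an edge $u\to w$ for each pair of distinct vertices joined by a path, weighted by the minimal path weight, and $|G|$ is the canonical form restricted to columns $0$ and $k$, renumbered $0$ and $1$. p-trees (relative to $H=|G_\sigma|$): a p-tree is a finite rooted tree with weighted edges whose nodes are labelled by $\top$ or by pairs $(x,y)\in X\times X$; nodes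 labelled $\top$ are leaves. A node labelled $(x,y)$ has children of exactly one of the following forms: (a) a single child $\top$, with edge weight $e$, where $H$ has an edge $(c,x)\to(c,y)$ of weight $e$ for some $c\in\{0,1\}$; (b) a single child $(u,v)$, with edge weight $e_1+e_2$, where for some $c,c'\in\{0,1\}$ with $c\ne c'$, $H$ has edges $(c,x)\to(c',u)$ of weight $e_1$ and $(c',v)\to(c,y)$ of weight $e_2$; (c) two children $(x,z)$ and $(z,y)$ for some $z\in X$, both with edge weight $(\le,0)$. The weight of a p-tree is the sum of all its edge weights. A p-tree is complete if all leaves are labelled $\top$. The height of a tree is the maximal number of edges on a root-to-leaf path. An $(x,y)$-$(u,v)$ context is a p-tree with root labelled $(x,y)$ all of whose leaves are labelled $\top$ except exactly one leaf labelled $(u,v)$. A pattern is an $(x,y)$-$(x,y)$ context of negative weight; $\sigma$ admits a pattern if one exists. *)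

theory Defs
  imports Main
begin

datatype strictness = Lt | Le

type_synonym weight = "strictness \<times> int"

fun wadd :: "weight \<Rightarrow> weight \<Rightarrow> weight" where
  "wadd (s1, d1) (s2, d2) = (if s1 = Lt \<or> s2 = Lt then Lt else Le, d1 + d2)"

fun wless :: "weight \<Rightarrow> weight \<Rightarrow> bool" where
  "wless (s1, d1) (s2, d2) \<longleftrightarrow> d1 < d2 \<or> (d1 = d2 \<and> s1 = Lt \<and> s2 = Le)"

definition wle :: "weight \<Rightarrow> weight \<Rightarrow> bool" where
  "wle a b \<longleftrightarrow> a = b \<or> wless a b"

definition wzero :: weight where "wzero = (Le, 0)"

definition negative :: "weight \<Rightarrow> bool" where
  "negative e \<longleftrightarrow> wless e wzero"

type_synonym 'c vertex = "nat \<times> 'c"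
type_synonym 'c wgraph = "('c vertex \<times> 'c vertex \<times> weight) set"

inductive wpath :: "'c wgraph \<Rightarrow> 'c vertex \<Rightarrow> 'c vertex \<Rightarrow> weight \<Rightarrow> bool" for G where
  edge: "(u, w, e) \<in> G \<Longrightarrow> wpath G u w e"
| step: "wpath G u v e1 \<Longrightarrow> (v, w, e2) \<in> G \<Longrightarrow> wpath G u w (wadd e1 e2)"

definition no_neg_cycle :: "'c wgraph \<Rightarrow> bool" where
  "no_neg_cycle G \<longleftrightarrow> \<not> (\<exists>u e. wpath G u u e \<and> negative e)"

definition canon :: "'c wgraph \<Rightarrow> 'c wgraph" where
  "canon G = {(u, w, m). u \<noteq> w \<and> wpath G u w m \<and> (\<forall>e. wpath G u w e \<longrightarrow> wle m e)}"

text \<open>|G|: canonical form restricted to columns 0 and k, renumbered 0 and 1.\<close>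
definition restrict_abs :: "'c wgraph \<Rightarrow> nat \<Rightarrow> 'c wgraph" where
  "restrict_abs G k = {((c, x), (c', y), m). c \<in> {0, 1} \<and> c' \<in> {0, 1} \<and>
       ((c * k, x), (c' * k, y), m) \<in> canon G}"

text \<open>A transition: a guard (a list of constraints (x, y, (\<preccurlyeq>, d)) meaning x - y \<preccurlyeq> d,
  where the distinguished clock x0 is the constant-zero clock) and a set of reset clocks.\<close>
datatype 'c transition = Trans (guard: "('c \<times> 'c \<times> weight) list") (resets: "'c set")

text \<open>An edge u \<rightarrow> w of weight (\<preccurlyeq>,d) encodes the difference constraint p(u) - p(w) \<preccurlyeq> d,
  where p(i,x) is minus the last reset time of x after i transitions and p(i,x0) is minus
  the current time; hence the value of x after i transitions is p(i,x) - p(i,x0).\<close>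
definition pre_vertex :: "'c \<Rightarrow> nat \<Rightarrow> 'c \<Rightarrow> 'c vertex" where
  "pre_vertex x0 i x = (if x = x0 then (i, x0) else (i - 1, x))"

definition trans_edges :: "'c \<Rightarrow> nat \<Rightarrow> 'c transition \<Rightarrow> 'c wgraph" where
  "trans_edges x0 i t =
     {((i, x0), (i - 1, x0), wzero)}
   \<union> {(pre_vertex x0 i x, pre_vertex x0 i y, e) | x y e. (x, y, e) \<in> set (guard t)}
   \<union> {((i, x), (i, x0), wzero) | x. x \<noteq> x0 \<and> x \<in> resets t}
   \<union> {((i, x0), (i, x), wzero) | x. x \<noteq> x0 \<and> x \<in> resets t}
   \<union> {((i, x), (i - 1, x), wzero) | x. x \<noteq> x0 \<and> x \<notin> resets t}
   \<union> {((i - 1, x), (i, x), wzero) | x. x \<noteq> x0 \<and> x \<notin> resets t}"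

definition nonneg_edges :: "'c \<Rightarrow> nat \<Rightarrow> 'c wgraph" where
  "nonneg_edges x0 k = {((i, x0), (i, x), wzero) | i x. i \<le> k \<and> x \<noteq> x0}"

definition tgraph :: "'c \<Rightarrow> 'c transition list \<Rightarrow> 'c wgraph" where
  "tgraph x0 \<sigma> = nonneg_edges x0 (length \<sigma>) \<union>
     (\<Union>i\<in>{1..length \<sigma>}. trans_edges x0 i (\<sigma> ! (i - 1)))"

definition absG :: "'c \<Rightarrow> 'c transition list \<Rightarrow> 'c wgraph" where
  "absG x0 \<sigma> = restrict_abs (tgraph x0 \<sigma>) (length \<sigma>)"

datatype 'c label = Top | P 'c 'c

datatype 'l tree = Nd 'l "('l tree \<times> weight) list"

fun root :: "'l tree \<Rightarrow> 'l" where
  "root (Nd l cs) = l"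

fun wsum :: "weight list \<Rightarrow> weight" where
  "wsum [] = wzero"
| "wsum (e # es) = wadd e (wsum es)"

fun tweight :: "'l tree \<Rightarrow> weight" where
  "tweight (Nd l cs) = wsum (map (\<lambda>(t, e). wadd e (tweight t)) cs)"

fun height :: "'l tree \<Rightarrow> nat" where
  "height (Nd l []) = 0"
| "height (Nd l (c # cs)) = Suc (Max (set (map (\<lambda>(t, e). height t) (c # cs))))"

fun leaves :: "'l tree \<Rightarrow> 'l list" where
  "leaves (Nd l []) = [l]"
| "leaves (Nd l (c # cs)) = concat (map (\<lambda>(t, e). leaves t) (c # cs))"

inductive ptree :: "'c wgraph \<Rightarrow> 'c label tree \<Rightarrow> bool" for H where
  top: "ptree H (Nd Top [])"
| leaf: "ptree H (Nd (P x y) [])"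
| form_a: "c \<in> {0, 1} \<Longrightarrow> ((c, x), (c, y), e) \<in> H \<Longrightarrow>
      ptree H (Nd (P x y) [(Nd Top [], e)])"
| form_b: "c \<in> {0, 1} \<Longrightarrow> c' \<in> {0, 1} \<Longrightarrow> c \<noteq> c' \<Longrightarrow>
      ((c, x), (c', u), e1) \<in> H \<Longrightarrow> ((c', v), (c, y), e2) \<in> H \<Longrightarrow>
      ptree H (Nd (P u v) cs) \<Longrightarrow>
      ptree H (Nd (P x y) [(Nd (P u v) cs, wadd e1 e2)])"
| form_c: "ptree H (Nd (P x z) cs1) \<Longrightarrow> ptree H (Nd (P z y) cs2) \<Longrightarrow>
      ptree H (Nd (P x y) [(Nd (P x z) cs1, wzero), (Nd (P z y) cs2, wzero)])"

definition complete_ptree :: "'c wgraph \<Rightarrow> 'c label tree \<Rightarrow> bool" where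
  "complete_ptree H t \<longleftrightarrow> ptree H t \<and> (\<forall>l \<in> set (leaves t). l = Top)"

definition is_context :: "'c wgraph \<Rightarrow> 'c label tree \<Rightarrow> 'c \<Rightarrow> 'c \<Rightarrow> 'c \<Rightarrow> 'c \<Rightarrow> bool" where
  "is_context H t x y u v \<longleftrightarrow> ptree H t \<and> root t = P x y \<and>
     filter (\<lambda>l. l \<noteq> Top) (leaves t) = [P u v]"

definition admits_pattern :: "'c \<Rightarrow> 'c transition list \<Rightarrow> bool" where
  "admits_pattern x0 \<sigma> \<longleftrightarrow>
     (\<exists>t x y. is_context (absG x0 \<sigma>) t x y x y \<and> negative (tweight t))"

end

theory Submission imports Defs begin


lemma strictness_cases: "s = Lt \<or> s = Le" by (cases s) auto
lemma neqLt[simp]: "s \<noteq> Lt \<longleftrightarrow> s = Le" by (cases s) auto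
lemma neqLe[simp]: "s \<noteq> Le \<longleftrightarrow> s = Lt" by (cases s) auto

lemma wadd_zero_left[simp]: "wadd wzero a = a" by (cases a) (simp add: wzero_def)
lemma wadd_zero_right[simp]: "wadd a wzero = a" by (cases a) (simp add: wzero_def)
lemma wadd_assoc: "wadd (wadd a b) c = wadd a (wadd b c)"
  by (cases a; cases b; cases c) auto
lemma wadd_comm: "wadd a b = wadd b a" by (cases a; cases b) auto
lemma wadd_lcomm: "wadd a (wadd b c) = wadd b (wadd a c)" by (metis wadd_assoc wadd_comm)

definition key :: "weight \<Rightarrow> int" where "key w = 2 * snd w + (if fst w = Le then 1 else 0)"

lemma wle_key: "wle a b \<longleftrightarrow> key a \<le> key b"
proof -
  obtain s1 d1 s2 d2 where ab: "a = (s1,d1)" "b = (s2,d2)" by (cases a, cases b)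
  show ?thesis unfolding ab by (cases s1; cases s2) (auto simp: wle_def key_def)
qed


lemma wadd_mono: "wle a b \<Longrightarrow> wle (wadd a c) (wadd b c)"
proof -
  assume w: "wle a b"
  obtain s1 d1 s2 d2 s3 d3 where abc: "a = (s1,d1)" "b = (s2,d2)" "c = (s3, d3)"
    by (cases a, cases b, cases c)
  show ?thesis using w unfolding abc wle_key by (cases s1; cases s2; cases s3) (auto simp: key_def)
qed

lemma wadd_mono2: "wle a b \<Longrightarrow> wle (wadd c a) (wadd c b)"
  using wadd_mono[of a b c] by (simp add: wadd_comm)
lemma wle_trans: "wle a b \<Longrightarrow> wle b c \<Longrightarrow> wle a c" by (simp add: wle_key)
lemma wle_refl[simp]: "wle a a" by (simp add: wle_key)
lemma not_neg: "\<not> negative c \<Longrightarrow> wle wzero c"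
  by (cases c) (auto simp: negative_def wle_def wzero_def)

abbreviation compl :: "'l label tree \<Rightarrow> bool" where
  "compl t \<equiv> (\<forall>l\<in>set (leaves t). l = Top)"

inductive sub :: "'l tree \<Rightarrow> 'l tree \<Rightarrow> bool" where
  refl: "sub t t"
| step: "(c, e) \<in> set cs \<Longrightarrow> sub s c \<Longrightarrow> sub s (Nd l cs)"

lemma leaves_child: "(c, e) \<in> set cs \<Longrightarrow> set (leaves c) \<subseteq> set (leaves (Nd l cs))"
proof -
  assume a: "(c, e) \<in> set cs"
  then obtain a0 r where "cs = a0 # r" by (cases cs) auto
  then have eq: "leaves (Nd l cs) = concat (map (\<lambda>(t, e). leaves t) cs)" by simp
  have "(\<lambda>(t, e). leaves t) (c, e) \<in> set (map (\<lambda>(t, e). leaves t) cs)"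
    unfolding set_map using a by (rule imageI)
  then have "leaves c \<in> set (map (\<lambda>(t, e). leaves t) cs)" by simp
  then show ?thesis unfolding eq by auto
qed

lemma sub_leaves: "sub s t \<Longrightarrow> set (leaves s) \<subseteq> set (leaves t)"
  by (induction rule: sub.induct) (auto dest!: leaves_child)

lemma ptree_child: "ptree H (Nd l cs) \<Longrightarrow> (c, e) \<in> set cs \<Longrightarrow> ptree H c"
  by (erule ptree.cases; auto intro: ptree.top)

lemma sub_ptree: "sub s t \<Longrightarrow> ptree H t \<Longrightarrow> ptree H s"
  by (induction rule: sub.induct) (auto dest: ptree_child)

lemma ptree_Top: "ptree H (Nd Top cs) \<Longrightarrow> cs = []"
  by (erule ptree.cases) auto

lemma ptree_internal: "ptree H (Nd l cs) \<Longrightarrow> cs \<noteq> [] \<Longrightarrow> \<exists>a b. l = P a b"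
  by (erule ptree.cases) auto


lemma tw1[simp]: "tweight (Nd l [(c, e)]) = wadd e (tweight c)" by simp
lemma tw2[simp]: "tweight (Nd l [(c1, wzero), (c2, wzero)]) = wadd (tweight c1) (tweight c2)" by simp

lemma root_P: "root t = P u v \<Longrightarrow> \<exists>cs. t = Nd (P u v) cs" by (cases t) auto
lemma root_PE: "root t = P u v \<Longrightarrow> (\<And>cs. t = Nd (P u v) cs \<Longrightarrow> thesis) \<Longrightarrow> thesis" by (cases t) auto

lemma compl_nil: "compl (Nd l [(c, e)]) = compl c" by simp
lemma filter_top: "compl t \<Longrightarrow> filter (\<lambda>l. l \<noteq> Top) (leaves t) = []"
  by (simp add: filter_empty_conv)

lemma ctx: "sub s t \<Longrightarrow> ptree H t \<Longrightarrow> compl t \<Longrightarrow> root s = P a b \<Longrightarrow>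
  \<exists>c. ptree H c \<and> root c = root t \<and> filter (\<lambda>l. l \<noteq> Top) (leaves c) = [P a b] \<and>
      tweight t = wadd (tweight c) (tweight s)"
proof (induction rule: sub.induct)
  case (refl t)
  have "ptree H (Nd (P a b) [])" by (rule ptree.leaf)
  moreover have "tweight t = wadd (tweight (Nd (P a b) [])) (tweight t)" by simp
  ultimately show ?case using refl by (intro exI[of _ "Nd (P a b) []"]) simp
next
  case (step c0 e cs s l)
  have pc: "ptree H c0" by (rule ptree_child[OF step.prems(1) step(1)])
  have cc: "compl c0" using leaves_child[OF step(1)] step.prems(2) by blast
  obtain c' where c': "ptree H c'" "root c' = root c0" "filter (\<lambda>l. l \<noteq> Top) (leaves c') = [P a b]"
    "tweight c0 = wadd (tweight c') (tweight s)" using step.IH[OF pc cc step.prems(3)] by blast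
  from step.prems(1) show ?case
  proof (cases rule: ptree.cases)
    case top then show ?thesis using step(1) by simp
  next
    case leaf then show ?thesis using step(1) by simp
  next
    case (form_a cc x y e')
    then have "c0 = Nd Top []" using step(1) by auto
    then have "c' = Nd Top []" using c' ptree_Top by (cases c') auto
    then show ?thesis using c' by simp
  next
    case (form_b cc cc' x u e1 v y e2 cs1)
    then have c0: "c0 = Nd (P u v) cs1" using step(1) by auto
    have "root c' = P u v" using c'(2) c0 by simp
      then obtain cs' where c'eq: "c' = Nd (P u v) cs'" by (rule root_PE)
    have "ptree H (Nd (P x y) [(c', wadd e1 e2)])"
      unfolding c'eq by (rule ptree.form_b[of cc cc']) (use form_b c' c'eq in auto)
    moreover have "tweight (Nd l cs) = wadd (tweight (Nd (P x y) [(c', wadd e1 e2)])) (tweight s)"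
      using form_b c' c0 by (simp add: wadd_assoc)
    ultimately show ?thesis using form_b c' by (intro exI[of _ "Nd (P x y) [(c', wadd e1 e2)]"]) auto
  next
    case (form_c x z cs1 y cs2)
    from step(1) form_c have "c0 = Nd (P x z) cs1 \<or> c0 = Nd (P z y) cs2" by auto
    then show ?thesis
    proof
      assume c0: "c0 = Nd (P x z) cs1"
      have "root c' = P x z" using c'(2) c0 by simp
      then obtain cs' where c'eq: "c' = Nd (P x z) cs'" by (rule root_PE)
      have "ptree H (Nd (P x y) [(c', wzero), (Nd (P z y) cs2, wzero)])"
        unfolding c'eq by (rule ptree.form_c) (use form_c c' c'eq in auto)
      moreover have "compl (Nd (P z y) cs2)" using step.prems(2) form_c by auto
      moreover have "tweight (Nd l cs) = wadd (tweight (Nd (P x y) [(c', wzero), (Nd (P z y) cs2, wzero)])) (tweight s)"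
        using form_c c' c0 by (simp add: wadd_assoc wadd_comm wadd_lcomm)
      ultimately show ?thesis using form_c c' filter_top[of "Nd (P z y) cs2"]
        by (intro exI[of _ "Nd (P x y) [(c', wzero), (Nd (P z y) cs2, wzero)]"]) auto
    next
      assume c0: "c0 = Nd (P z y) cs2"
      have "root c' = P z y" using c'(2) c0 by simp
      then obtain cs' where c'eq: "c' = Nd (P z y) cs'" by (rule root_PE)
      have "ptree H (Nd (P x y) [(Nd (P x z) cs1, wzero), (c', wzero)])"
        unfolding c'eq by (rule ptree.form_c) (use form_c c' c'eq in auto)
      moreover have "compl (Nd (P x z) cs1)" using step.prems(2) form_c by auto
      moreover have "tweight (Nd l cs) = wadd (tweight (Nd (P x y) [(Nd (P x z) cs1, wzero), (c', wzero)])) (tweight s)"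
        using form_c c' c0 by (simp add: wadd_assoc)
      ultimately show ?thesis using form_c c' filter_top[of "Nd (P x z) cs1"]
        by (intro exI[of _ "Nd (P x y) [(Nd (P x z) cs1, wzero), (c', wzero)]"]) auto
    qed
  qed
qed


inductive avoid :: "'c label set \<Rightarrow> 'c label tree \<Rightarrow> bool" where
  nil: "avoid A (Nd l [])"
| cons: "l \<notin> A \<Longrightarrow> l \<noteq> Top \<Longrightarrow> cs \<noteq> [] \<Longrightarrow> (\<forall>x\<in>set cs. avoid (insert l A) (fst x)) \<Longrightarrow> avoid A (Nd l cs)"

lemma avoid_mono: "avoid B t \<Longrightarrow> A \<subseteq> B \<Longrightarrow> avoid A t"
proof (induction arbitrary: A rule: avoid.induct)
  case (nil A l) show ?case by (rule avoid.nil)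
next
  case (cons l B cs)
  have "\<forall>x\<in>set cs. avoid (insert l A) (fst x)"
  proof
    fix x assume "x \<in> set cs"
    then have "\<forall>xa\<subseteq>insert l B. avoid xa (fst x)" using cons.IH by blast
    moreover have "insert l A \<subseteq> insert l B" using cons.prems by auto
    ultimately show "avoid (insert l A) (fst x)" by blast
  qed
  then show ?case using cons by (intro avoid.cons) auto
qed

lemma avoid_child: "avoid A (Nd l cs) \<Longrightarrow> (c, e) \<in> set cs \<Longrightarrow> avoid (insert l A) c"
proof -
  assume a: "avoid A (Nd l cs)" and m: "(c, e) \<in> set cs"
  from a show ?thesis
  proof cases
    case nil then show ?thesis using m by simp
  next
    case cons
    have "avoid (insert l A) (fst (c, e))" using bspec[OF cons(4) m] .
    then show ?thesis by simp
  qed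
qed

lemma sub_avoid: "sub s t \<Longrightarrow> avoid A t \<Longrightarrow> avoid A s"
proof (induction arbitrary: A rule: sub.induct)
  case (refl t) then show ?case .
next
  case (step c e cs s l)
  have "avoid (insert l A) c" by (rule avoid_child[OF step.prems step(1)])
  then have "avoid (insert l A) s" by (rule step.IH)
  then show ?case by (rule avoid_mono) auto
qed

lemma avoid_ext: "avoid A t \<Longrightarrow> (\<forall>s. sub s t \<longrightarrow> root s \<noteq> m) \<Longrightarrow> avoid (insert m A) t"
proof (induction rule: avoid.induct)
  case (nil A l) show ?case by (rule avoid.nil)
next
  case (cons l A cs)
  have "l \<noteq> m" using cons.prems sub.refl[of "Nd l cs"] by auto
  moreover have "\<forall>x\<in>set cs. avoid (insert l (insert m A)) (fst x)"
  proof
    fix x assume x: "x \<in> set cs"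
    obtain c e where xe: "x = (c, e)" by (cases x)
    have "\<forall>s. sub s c \<longrightarrow> root s \<noteq> m"
    proof (intro allI impI)
      fix s assume "sub s c"
      then have "sub s (Nd l cs)" using x xe by (intro sub.step[of c e]) auto
      then show "root s \<noteq> m" using cons.prems by blast
    qed
    moreover have "avoid (insert l A) (fst x) \<and> ((\<forall>s. sub s (fst x) \<longrightarrow> root s \<noteq> m) \<longrightarrow> avoid (insert m (insert l A)) (fst x))"
      by (rule bspec[OF cons.IH x])
    ultimately have "avoid (insert m (insert l A)) c" using xe by simp
    then show "avoid (insert l (insert m A)) (fst x)" using xe by (simp add: insert_commute)
  qed
  ultimately show ?case using cons by (intro avoid.cons) auto
qed

definition Plabs :: "'c label set" where "Plabs = {l. l \<noteq> Top}"

lemma Plabs_img: "Plabs = (\<lambda>(a, b). P a b) ` UNIV"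
proof (rule set_eqI)
  fix l :: "'c label"
  show "l \<in> Plabs \<longleftrightarrow> l \<in> (\<lambda>(a, b). P a b) ` UNIV"
  proof (cases l)
    case Top
    then show ?thesis by (auto simp: Plabs_def)
  next
    case (P a b)
    have "P a b \<in> (\<lambda>(a, b). P a b) ` UNIV" by (rule rev_image_eqI[of "(a, b)"]) simp_all
    then show ?thesis using P by (simp add: Plabs_def)
  qed
qed

lemma Plabs_finite: "finite (Plabs :: ('c::finite) label set)"
  unfolding Plabs_img by simp

lemma Plabs_card: "card (Plabs :: ('c::finite) label set) = card (UNIV :: 'c set) ^ 2"
proof -
  have "inj (\<lambda>(a, b). P a b :: 'c label)" by (rule injI) (simp add: split_def prod_eq_iff)
  then have "card (Plabs :: 'c label set) = card (UNIV :: ('c \<times> 'c) set)"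
    unfolding Plabs_img by (rule card_image)
  also have "\<dots> = card (UNIV :: 'c set) * card (UNIV :: 'c set)"
    by (simp only: card_cartesian_product flip: UNIV_Times_UNIV)
  finally show ?thesis by (simp add: power2_eq_square)
qed

lemma avoid_height: "avoid A t \<Longrightarrow> height t \<le> card ((Plabs :: ('c::finite) label set) - A)"
proof (induction rule: avoid.induct)
  case (nil A l) then show ?case by simp
next
  case (cons l A cs)
  obtain c0 r where cs: "cs = c0 # r" using cons(3) by (cases cs) auto
  have lin: "l \<in> Plabs - A" using cons(1,2) by (simp add: Plabs_def)
  have fin: "finite (Plabs - A)" using Plabs_finite by auto
  have eq: "Plabs - insert l A = (Plabs - A) - {l}" by blast
  have pos: "card (Plabs - A) > 0" using lin fin card_gt_0_iff by blast
  have hx: "height (fst x) \<le> card (Plabs - A) - 1" if x: "x \<in> set cs" for x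
  proof -
    have "avoid (insert l A) (fst x) \<and> height (fst x) \<le> card (Plabs - insert l A)"
      by (rule bspec[OF cons.IH x])
    then show ?thesis unfolding eq card_Diff_singleton[OF lin] by simp
  qed
  have m: "Max (set (map (\<lambda>(t, e). height t) cs)) \<le> card (Plabs - A) - 1"
  proof (rule Max.boundedI)
    show "finite (set (map (\<lambda>(t, e). height t) cs))" by simp
    show "set (map (\<lambda>(t, e). height t) cs) \<noteq> {}" using cs by simp
    fix k assume "k \<in> set (map (\<lambda>(t, e). height t) cs)"
    then obtain x where x: "x \<in> set cs" "k = (\<lambda>(t, e). height t) x" by auto
    show "k \<le> card (Plabs - A) - 1" using hx[OF x(1)] x(2) by (simp add: split_def)
  qed
  have "height (Nd l cs) = Suc (Max (set (map (\<lambda>(t, e). height t) cs)))" using cs by (simp only: height.simps)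
  then show ?case using m pos by linarith
qed


definition NP :: "'c wgraph \<Rightarrow> bool" where
  "NP H \<longleftrightarrow> (\<forall>c a b. ptree H c \<and> root c = P a b \<and> filter (\<lambda>l. l \<noteq> Top) (leaves c) = [P a b]
      \<longrightarrow> \<not> negative (tweight c))"

definition good :: "'c wgraph \<Rightarrow> 'c label tree \<Rightarrow> 'c label tree \<Rightarrow> bool" where
  "good H t t' \<longleftrightarrow> ptree H t' \<and> compl t' \<and> root t' = root t \<and> wle (tweight t') (tweight t) \<and> avoid {} t'"

lemma repair:
  assumes "ptree H (Nd l cs)" "compl (Nd l cs)" "NP H" "\<forall>x\<in>set cs. avoid {} (fst x)"
  shows "\<exists>t'. good H (Nd l cs) t'"
proof (cases "cs = []")
  case True
  then show ?thesis using assms by (intro exI[of _ "Nd l cs"]) (auto simp: good_def intro: avoid.nil)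
next
  case False
  then obtain a b where l: "l = P a b" using ptree_internal assms(1) by blast
  show ?thesis
  proof (cases "\<exists>x\<in>set cs. \<exists>s. sub s (fst x) \<and> root s = l")
    case True
    then obtain x s where xs: "x \<in> set cs" "sub s (fst x)" "root s = l" by blast
    obtain c e where "x = (c, e)" by (cases x)
    then have ce: "(c, e) \<in> set cs" "sub s c" "root s = l" using xs by simp_all
    have sub: "sub s (Nd l cs)" by (rule sub.step[OF ce(1) ce(2)])
    obtain cx where cx: "ptree H cx" "root cx = root (Nd l cs)"
      "filter (\<lambda>l. l \<noteq> Top) (leaves cx) = [P a b]" "tweight (Nd l cs) = wadd (tweight cx) (tweight s)"
      using ctx[OF sub assms(1,2), of a b] ce(3) l by blast
    have "\<not> negative (tweight cx)" using assms(3) cx l unfolding NP_def by auto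
    then have "wle wzero (tweight cx)" by (rule not_neg)
    then have "wle (wadd wzero (tweight s)) (wadd (tweight cx) (tweight s))" by (rule wadd_mono)
    then have w: "wle (tweight s) (tweight (Nd l cs))" using cx by simp
    have "avoid {} s" proof -
      have "avoid {} (fst (c, e))" by (rule bspec[OF assms(4) ce(1)])
      then show ?thesis using sub_avoid[OF ce(2)] by simp
    qed
    moreover have "ptree H s" using sub_ptree[OF sub assms(1)] .
    moreover have "compl s" using sub_leaves[OF sub] assms(2) by auto
    ultimately show ?thesis using w ce by (intro exI[of _ s]) (auto simp: good_def)
  next
    case False
    have "\<forall>x\<in>set cs. avoid (insert l {}) (fst x)"
      using False assms(4) avoid_ext by blast
    then have "avoid {} (Nd l cs)" using l \<open>cs \<noteq> []\<close> by (intro avoid.cons) auto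
    then show ?thesis using assms by (intro exI[of _ "Nd l cs"]) (auto simp: good_def)
  qed
qed

lemma good_trans: "good H t1 t' \<Longrightarrow> root t1 = root t \<Longrightarrow> wle (tweight t1) (tweight t) \<Longrightarrow> good H t t'"
  unfolding good_def by (metis wle_trans)

lemma shrink: "ptree H t \<Longrightarrow> compl t \<Longrightarrow> NP H \<Longrightarrow> \<exists>t'. good H t t'"
proof (induction rule: ptree.induct)
  case top
  then show ?case by (intro exI[of _ "Nd Top []"]) (auto simp: good_def intro: avoid.nil ptree.top)
next
  case (leaf x y) then show ?case by simp
next
  case (form_a c x y e)
  then show ?case by (intro repair) (auto intro: ptree.form_a avoid.nil)
next
  case (form_b c c' x u e1 v y e2 cs)
  obtain t1 where g: "good H (Nd (P u v) cs) t1" using form_b by auto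
  then have "root t1 = P u v" unfolding good_def by auto
  then obtain cs1 where t1: "t1 = Nd (P u v) cs1" by (rule root_PE)
  have p: "ptree H (Nd (P x y) [(t1, wadd e1 e2)])" unfolding t1
    by (rule ptree.form_b[of c c']) (use form_b g t1 in \<open>auto simp: good_def\<close>)
  obtain t' where "good H (Nd (P x y) [(t1, wadd e1 e2)]) t'"
    using repair[OF p] g form_b unfolding good_def by auto
  moreover have "wle (tweight (Nd (P x y) [(t1, wadd e1 e2)])) (tweight (Nd (P x y) [(Nd (P u v) cs, wadd e1 e2)]))"
    using g unfolding good_def by (simp add: wadd_mono2)
  ultimately have "good H (Nd (P x y) [(Nd (P u v) cs, wadd e1 e2)]) t'"
    by (metis good_trans root.simps)
  then show ?case by blast
next
  case (form_c x z cs1 y cs2)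
  obtain t1 where g1: "good H (Nd (P x z) cs1) t1" using form_c by auto
  then have "root t1 = P x z" unfolding good_def by auto
  then obtain cs1' where t1: "t1 = Nd (P x z) cs1'" by (rule root_PE)
  obtain t2 where g2: "good H (Nd (P z y) cs2) t2" using form_c by auto
  then have "root t2 = P z y" unfolding good_def by auto
  then obtain cs2' where t2: "t2 = Nd (P z y) cs2'" by (rule root_PE)
  have p: "ptree H (Nd (P x y) [(t1, wzero), (t2, wzero)])" unfolding t1 t2
    by (rule ptree.form_c) (use g1 g2 t1 t2 in \<open>auto simp: good_def\<close>)
  obtain t' where "good H (Nd (P x y) [(t1, wzero), (t2, wzero)]) t'"
    using repair[OF p] g1 g2 form_c unfolding good_def by auto
  moreover have "wle (tweight (Nd (P x y) [(t1, wzero), (t2, wzero)]))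
     (tweight (Nd (P x y) [(Nd (P x z) cs1, wzero), (Nd (P z y) cs2, wzero)]))"
    using g1 g2 unfolding good_def tw2 by (meson wadd_mono wadd_mono2 wle_trans)
  ultimately have "good H (Nd (P x y) [(Nd (P x z) cs1, wzero), (Nd (P z y) cs2, wzero)]) t'"
    by (metis good_trans root.simps)
  then show ?case by blast
qed


lemma wle_antisym: "wle a b \<Longrightarrow> wle b a \<Longrightarrow> a = b"
  by (cases a; cases b) (auto simp: wle_def)

lemma canon_unique: "(u, w, m1) \<in> canon G \<Longrightarrow> (u, w, m2) \<in> canon G \<Longrightarrow> m1 = m2"
  unfolding canon_def using wle_antisym by blast

lemma absG_unique: "(u, w, m1) \<in> absG x0 \<sigma> \<Longrightarrow> (u, w, m2) \<in> absG x0 \<sigma> \<Longrightarrow> m1 = m2"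
  unfolding absG_def restrict_abs_def using canon_unique by fast

lemma absG_fin: "finite {e. \<exists>u w. (u, w, e) \<in> absG x0 (\<sigma> :: ('c::finite) transition list)}"
proof -
  let ?H = "absG x0 \<sigma>"
  let ?V = "({0, 1::nat} \<times> (UNIV :: 'c set))"
  have "{e. \<exists>u w. (u, w, e) \<in> ?H} \<subseteq> (\<lambda>(u, w). THE m. (u, w, m) \<in> ?H) ` (?V \<times> ?V)"
  proof
    fix e assume "e \<in> {e. \<exists>u w. (u, w, e) \<in> ?H}"
    then obtain u w where uw: "(u, w, e) \<in> ?H" by blast
    then have "u \<in> ?V" "w \<in> ?V" unfolding absG_def restrict_abs_def by auto
    moreover have "(THE m. (u, w, m) \<in> ?H) = e"
    proof (rule the_equality)
      show "(u, w, e) \<in> ?H" by (rule uw)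
      fix m assume "(u, w, m) \<in> ?H" then show "m = e" using uw by (rule absG_unique)
    qed
    ultimately show "e \<in> (\<lambda>(u, w). THE m. (u, w, m) \<in> ?H) ` (?V \<times> ?V)" by force
  qed
  moreover have "finite (?V \<times> ?V)" by simp
  ultimately show ?thesis using finite_surj by blast
qed

lemma label_finite: "finite (UNIV :: ('c::finite) label set)"
proof -
  have "UNIV = insert Top (Plabs :: 'c label set)" unfolding Plabs_def by auto
  then show ?thesis using Plabs_finite by (metis finite_insert)
qed

lemma height0: "height t = 0 \<Longrightarrow> \<exists>l. t = Nd l []"
  by (cases t rule: height.cases) auto

lemma finite_T:
  assumes E: "finite {e. \<exists>u w. (u, w, e) \<in> H}"
  shows "finite {t :: ('c::finite) label tree. ptree H t \<and> height t \<le> h}"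
proof (induction h)
  case 0
  have "{t :: 'c label tree. ptree H t \<and> height t \<le> 0} \<subseteq> (\<lambda>l. Nd l []) ` UNIV"
    using height0 by auto
  then show ?case using finite_subset label_finite by blast
next
  case (Suc h)
  let ?E = "{e. \<exists>u w. (u, w, e) \<in> H}"
  let ?E2 = "?E \<union> (\<lambda>(a, b). wadd a b) ` (?E \<times> ?E)"
  let ?T = "{t :: 'c label tree. ptree H t \<and> height t \<le> h}"
  let ?S0 = "(\<lambda>l. Nd l []) ` (UNIV :: 'c label set)"
  let ?A1 = "(\<lambda>(l, c, e). Nd l [(c, e)]) ` (UNIV \<times> ?T \<times> ?E2)"
  let ?A2 = "(\<lambda>(l, c1, c2). Nd l [(c1, wzero), (c2, wzero)]) ` (UNIV \<times> ?T \<times> ?T)"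
  have "{t :: 'c label tree. ptree H t \<and> height t \<le> Suc h} \<subseteq> ?S0 \<union> ?A1 \<union> ?A2"
  proof
    fix t :: "'c label tree" assume "t \<in> {t. ptree H t \<and> height t \<le> Suc h}"
    then have pt: "ptree H t" and ht: "height t \<le> Suc h" by auto
    from pt show "t \<in> ?S0 \<union> ?A1 \<union> ?A2"
    proof (cases rule: ptree.cases)
      case top then show ?thesis by auto
    next
      case leaf then show ?thesis by auto
    next
      case (form_a c x y e)
      then have mem: "(P x y, Nd Top [], e) \<in> UNIV \<times> ?T \<times> ?E2" by (auto intro: ptree.top)
      have "t \<in> ?A1" by (rule rev_image_eqI[OF mem]) (simp add: form_a)
      then show ?thesis by blast
    next
      case (form_b c c' x u e1 v y e2 cs)
      have "wadd e1 e2 \<in> (\<lambda>(a, b). wadd a b) ` (?E \<times> ?E)"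
        by (rule rev_image_eqI[of "(e1, e2)"]) (use form_b in auto)
      then have mem: "(P x y, Nd (P u v) cs, wadd e1 e2) \<in> UNIV \<times> ?T \<times> ?E2" using ht form_b by auto
      have "t \<in> ?A1" by (rule rev_image_eqI[OF mem]) (simp add: form_b)
      then show ?thesis by blast
    next
      case (form_c x z cs1 y cs2)
      then have mem: "(P x y, Nd (P x z) cs1, Nd (P z y) cs2) \<in> UNIV \<times> ?T \<times> ?T" using ht by auto
      have "t \<in> ?A2" by (rule rev_image_eqI[OF mem]) (simp add: form_c)
      then show ?thesis by blast
    qed
  qed
  moreover have "finite ?E2" using E by simp
  ultimately show ?case using Suc label_finite finite_subset by (metis (no_types, lifting) finite_Un finite_SigmaI finite_imageI)
qed


theorem mainTheorem17:
  fixes x0 :: "'c::finite" and \<sigma> :: "'c transition list" and x y :: 'c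
  assumes "no_neg_cycle (tgraph x0 \<sigma>)"
    and "\<not> admits_pattern x0 \<sigma>"
    and "\<exists>t. complete_ptree (absG x0 \<sigma>) t \<and> root t = P x y"
  shows "\<exists>t. complete_ptree (absG x0 \<sigma>) t \<and> root t = P x y \<and>
           height t \<le> card (UNIV :: 'c set) ^ 2 \<and>
           (\<forall>t'. complete_ptree (absG x0 \<sigma>) t' \<and> root t' = P x y \<longrightarrow> wle (tweight t) (tweight t'))"
proof -
  let ?H = "absG x0 \<sigma>"
  let ?N = "card (UNIV :: 'c set) ^ 2"
  have np: "NP ?H" using assms(2) unfolding NP_def admits_pattern_def is_context_def negative_def
    by blast
  have hb: "avoid {} t \<Longrightarrow> height t \<le> ?N" for t :: "'c label tree"
    using avoid_height[of "{}" t] Plabs_card[where 'c='c] by simp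
  let ?S = "{t. ptree ?H t \<and> compl t \<and> root t = P x y \<and> height t \<le> ?N}"
  have red: "\<exists>t''\<in>?S. wle (tweight t'') (tweight t')" if tc: "complete_ptree ?H t'" "root t' = P x y" for t'
  proof -
    have "ptree ?H t'" "compl t'" using tc(1) unfolding complete_ptree_def by auto
    then obtain t'' where "good ?H t' t''" using shrink[OF _ _ np] by blast
    then show ?thesis using tc hb unfolding good_def by auto
  qed
  have fin: "finite ?S"
    using finite_T[OF absG_fin, of x0 \<sigma> ?N] by (rule finite_subset[rotated]) auto
  obtain t0 where "complete_ptree ?H t0" "root t0 = P x y" using assms(3) by blast
  then have ne: "?S \<noteq> {}" using red by blast
  let ?f = "\<lambda>t. key (tweight t)"
  have "Min (?f ` ?S) \<in> ?f ` ?S" using fin ne by (intro Min_in) auto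
  then obtain tm where tm: "tm \<in> ?S" "?f tm = Min (?f ` ?S)" by auto
  have mn: "wle (tweight tm) (tweight t)" if "t \<in> ?S" for t
    using tm that fin by (simp add: wle_key)
  show ?thesis
  proof (intro exI[of _ tm] conjI allI impI)
    show "complete_ptree ?H tm" using tm unfolding complete_ptree_def by auto
    show "root tm = P x y" "height tm \<le> ?N" using tm by auto
    fix t' assume "complete_ptree ?H t' \<and> root t' = P x y"
    then obtain t'' where "t'' \<in> ?S" "wle (tweight t'') (tweight t')" using red by blast
    then show "wle (tweight tm) (tweight t')" using mn wle_trans by blast
  qed
qed

end
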